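(* Let $V$ be a non-empty finite linearly ordered set, and let $\mathscr{X}$ be a system of non-empty subsets of $V$ such that $\max X<\max V$ for every $X\in\mathscr{X}$. Then the number of subsets of $V$ of even cardinality that do not include any $X\in\mathscr{X}$ as a subset equals the number of subsets of $V$ of odd cardinality that do not include any $X\in\mathscr{X}$ as a subset. *)

theory Defs
  imports Main
begin

end

theory Submission
  imports Defs
begin

theorem lemma2:
  fixes V :: "'a::linorder set" and \<X> :: "'a set set"
  assumes "finite V" and "V \<noteq> {}"
    and "\<forall>X\<in>\<X>. X \<subseteq> V \<and> X \<noteq> {} \<and> Max X < Max V"
  shows "card {S. S \<subseteq> V \<and> even (card S) \<and> (\<forall>X\<in>\<X>. \<not> X \<subseteq> S)}
       = card {S. S \<subseteq> V \<and> odd (card S) \<and> (\<forall>X\<in>\<X>. \<not> X \<subseteq> S)}"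
proof -
  define m where "m = Max V"
  have mV: "m \<in> V" using assms(1,2) m_def by simp
  have notin: "m \<notin> X" if "X \<in> \<X>" for X
  proof
    assume "m \<in> X"
    have "finite X" using assms(3) that assms(1) finite_subset by blast
    then have "m \<le> Max X" using \<open>m \<in> X\<close> by simp
    then show False using assms(3) that m_def by fastforce
  qed
  define f where "f S = (if m \<in> S then S - {m} else insert m S)" for S
  have ff: "f (f S) = S" for S unfolding f_def by auto
  have sub: "X \<subseteq> f S \<longleftrightarrow> X \<subseteq> S" if "X \<in> \<X>" for X S
    using notin[OF that] unfolding f_def by auto
  have fV: "f S \<subseteq> V \<longleftrightarrow> S \<subseteq> V" for S using mV unfolding f_def by auto
  have par: "even (card (f S)) \<longleftrightarrow> odd (card S)" if "S \<subseteq> V" for S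
  proof -
    have fin: "finite S" using that assms(1) finite_subset by blast
    show ?thesis
    proof (cases "m \<in> S")
      case True
      then have "card S = Suc (card (S - {m}))" using fin
        by (metis card_Suc_Diff1)
      then show ?thesis using True unfolding f_def by simp
    next
      case False
      then show ?thesis using fin unfolding f_def by simp
    qed
  qed
  have par2: "odd (card (f S)) \<longleftrightarrow> even (card S)" if "S \<subseteq> V" for S
    using par[OF that] by simp
  show ?thesis
  proof (rule bij_betw_same_card[of f], rule bij_betw_byWitness[where f'=f])
    show "\<forall>S\<in>{S. S \<subseteq> V \<and> even (card S) \<and> (\<forall>X\<in>\<X>. \<not> X \<subseteq> S)}. f (f S) = S" using ff by blast
    show "\<forall>S\<in>{S. S \<subseteq> V \<and> odd (card S) \<and> (\<forall>X\<in>\<X>. \<not> X \<subseteq> S)}. f (f S) = S" using ff by blast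
    show "f ` {S. S \<subseteq> V \<and> even (card S) \<and> (\<forall>X\<in>\<X>. \<not> X \<subseteq> S)} \<subseteq> {S. S \<subseteq> V \<and> odd (card S) \<and> (\<forall>X\<in>\<X>. \<not> X \<subseteq> S)}"
    proof (rule image_subsetI)
      fix S assume "S \<in> {S. S \<subseteq> V \<and> even (card S) \<and> (\<forall>X\<in>\<X>. \<not> X \<subseteq> S)}"
      then have a: "S \<subseteq> V" "even (card S)" "\<forall>X\<in>\<X>. \<not> X \<subseteq> S" by auto
      have "f S \<subseteq> V" using a fV by blast
      moreover have "odd (card (f S))" using a par2 by blast
      moreover have "\<forall>X\<in>\<X>. \<not> X \<subseteq> f S" using a sub by blast
      ultimately show "f S \<in> {S. S \<subseteq> V \<and> odd (card S) \<and> (\<forall>X\<in>\<X>. \<not> X \<subseteq> S)}" by blast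
    qed
    show "f ` {S. S \<subseteq> V \<and> odd (card S) \<and> (\<forall>X\<in>\<X>. \<not> X \<subseteq> S)} \<subseteq> {S. S \<subseteq> V \<and> even (card S) \<and> (\<forall>X\<in>\<X>. \<not> X \<subseteq> S)}"
    proof (rule image_subsetI)
      fix S assume "S \<in> {S. S \<subseteq> V \<and> odd (card S) \<and> (\<forall>X\<in>\<X>. \<not> X \<subseteq> S)}"
      then have a: "S \<subseteq> V" "odd (card S)" "\<forall>X\<in>\<X>. \<not> X \<subseteq> S" by auto
      have "f S \<subseteq> V" using a fV by blast
      moreover have "even (card (f S))" using a par by blast
      moreover have "\<forall>X\<in>\<X>. \<not> X \<subseteq> f S" using a sub by blast
      ultimately show "f S \<in> {S. S \<subseteq> V \<and> even (card S) \<and> (\<forall>X\<in>\<X>. \<not> X \<subseteq> S)}" by blast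
    qed
  qed
qed

end
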